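(* For every space $\mathcal{BL}_F(\{\mathcal{F}_1,\dots,\mathcal{F}_{B_{\mathcal{G}}}\})$ of jointly bandlimited FTVGS with joint bandwidth $B$, there exists a stable sampling set $\mathcal{S}\subseteq\mathcal{V}_{\mathcal{G}}\times\mathcal{V}_{\mathcal{T}}$ (allowing perfect reconstruction of every $\mathbf{X}$ in the space from $\{\mathbf{X}(v,n):(v,n)\in\mathcal{S}\}$) with $|\mathcal{S}|=B$, i.e. total sampling ratio $R_F(\mathcal{S})=B/(NT)$, and with vertex projection $\mathcal{S}_{\mathcal{G}}=\{v:(v,n)\in\mathcal{S}\}$ satisfying $|\mathcal{S}_{\mathcal{G}}|\le B_{\mathcal{G}}$. Hence critical sampling of jointly bandlimited FTVGS is achievable.
   Context: $\mathcal{G}$ undirected graph with $N$ vertices and orthonormal Laplacian eigenvector matrix $\mathbf{U}_{\mathcal{G}}$; $\mathcal{V}_{\mathcal{T}}=\{1,\dots,T\}$ with $\mathbf{U}_{\mathcal{T}}$ the $T\times T$ unitary normalized DFT matrix $\mathbf{U}_{\mathcal{T}}^H(n,m)=T^{-1/2}e^{-j2\pi(m-1)n/T}$. FTVGS $\mathbf{X}\in\mathbb{C}^{N\times T}$; JFT $\mathcal{F}_{\mathcal{J}}(\mathbf{X})=\mathbf{U}_{\mathcal{G}}^H\mathbf{X}\overline{\mathbf{U}}_{\mathcal{T}}$. $\mathcal{F}_i\subseteq\{1,\dots,T\}$ is the allowed support of row $i$ of the JFT; $\mathcal{I}=\{i:\mathcal{F}_i\ne\emptyset\}$, $B_{\mathcal{G}}=|\mathcal{I}|$,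 joint bandwidth $B=\sum_i|\mathcal{F}_i|<NT$. $\mathcal{BL}_F(\{\mathcal{F}_1,\dots,\mathcal{F}_{B_{\mathcal{G}}}\})=\{\mathbf{X}:\mathcal{F}_{\mathcal{J}}(\mathbf{X})(i,f)=0\ \forall f\notin\mathcal{F}_i\}$. Stability of $\mathcal{S}$: $A\|\mathbf{X}\|^2\le\sum_{(v,n)\in\mathcal{S}}|\mathbf{X}(v,n)|^2\le A'\|\mathbf{X}\|^2$ for some $0<A\le A'<\infty$ and all $\mathbf{X}$ in the space. $R_F(\mathcal{S})=|\mathcal{S}|/(NT)$. *)

theory Defs
  imports Complex_Main
begin

text \<open>Conventions: vertices are 1..N, time instants are 1..T (1-based, as in the paper).
  Matrices are functions nat => nat => _ read on the relevant index ranges.\<close>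

definition undirected_graph :: "nat \<Rightarrow> (nat \<Rightarrow> nat \<Rightarrow> real) \<Rightarrow> bool" where
  "undirected_graph N W \<longleftrightarrow>
     (\<forall>i\<in>{1..N}. \<forall>j\<in>{1..N}. W i j = W j i \<and> W i j \<ge> 0) \<and> (\<forall>i\<in>{1..N}. W i i = 0)"

definition laplacian :: "nat \<Rightarrow> (nat \<Rightarrow> nat \<Rightarrow> real) \<Rightarrow> nat \<Rightarrow> nat \<Rightarrow> real" where
  "laplacian N W i j = (if i = j then (\<Sum>k\<in>{1..N}. W i k) else 0) - W i j"

definition orthonormal_laplacian_eigvecs ::
  "nat \<Rightarrow> (nat \<Rightarrow> nat \<Rightarrow> real) \<Rightarrow> (nat \<Rightarrow> nat \<Rightarrow> real) \<Rightarrow> bool" where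
  "orthonormal_laplacian_eigvecs N W U \<longleftrightarrow>
     (\<forall>i\<in>{1..N}. \<forall>j\<in>{1..N}. (\<Sum>k\<in>{1..N}. U k i * U k j) = (if i = j then 1 else 0)) \<and>
     (\<forall>k\<in>{1..N}. \<exists>lam::real. \<forall>i\<in>{1..N}. (\<Sum>j\<in>{1..N}. laplacian N W i j * U j k) = lam * U i k)"

definition dftH :: "nat \<Rightarrow> nat \<Rightarrow> nat \<Rightarrow> complex" where
  "dftH T n m = complex_of_real (1 / sqrt (real T)) *
                 exp (- \<i> * complex_of_real (2 * pi * (real m - 1) * real n / real T))"

definition dftU :: "nat \<Rightarrow> nat \<Rightarrow> nat \<Rightarrow> complex" where
  "dftU T n m = cnj (dftH T m n)"

text \<open>Joint Fourier transform  F_J(X) = U_G^H X conj(U_T).\<close>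
definition JFT :: "nat \<Rightarrow> nat \<Rightarrow> (nat \<Rightarrow> nat \<Rightarrow> real) \<Rightarrow> (nat \<Rightarrow> nat \<Rightarrow> complex) \<Rightarrow> nat \<Rightarrow> nat \<Rightarrow> complex" where
  "JFT N T U X i f = (\<Sum>v\<in>{1..N}. \<Sum>n\<in>{1..T}.
       cnj (complex_of_real (U v i)) * X v n * cnj (dftU T n f))"

definition BL_F :: "nat \<Rightarrow> nat \<Rightarrow> (nat \<Rightarrow> nat \<Rightarrow> real) \<Rightarrow> (nat \<Rightarrow> nat set) \<Rightarrow> (nat \<Rightarrow> nat \<Rightarrow> complex) set" where
  "BL_F N T U F = {X. (\<forall>v n. (v \<notin> {1..N} \<or> n \<notin> {1..T}) \<longrightarrow> X v n = 0) \<and>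
                      (\<forall>i\<in>{1..N}. \<forall>f\<in>{1..T}. f \<notin> F i \<longrightarrow> JFT N T U X i f = 0)}"

definition sqnorm :: "nat \<Rightarrow> nat \<Rightarrow> (nat \<Rightarrow> nat \<Rightarrow> complex) \<Rightarrow> real" where
  "sqnorm N T X = (\<Sum>v\<in>{1..N}. \<Sum>n\<in>{1..T}. (cmod (X v n))\<^sup>2)"

definition stable_sampling :: "nat \<Rightarrow> nat \<Rightarrow> (nat \<Rightarrow> nat \<Rightarrow> complex) set \<Rightarrow> (nat \<times> nat) set \<Rightarrow> bool" where
  "stable_sampling N T Sp S \<longleftrightarrow> (\<exists>A A'. 0 < A \<and> A \<le> A' \<and>
     (\<forall>X\<in>Sp. A * sqnorm N T X \<le> (\<Sum>(v,n)\<in>S. (cmod (X v n))\<^sup>2) \<and>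
              (\<Sum>(v,n)\<in>S. (cmod (X v n))\<^sup>2) \<le> A' * sqnorm N T X))"

definition joint_bandwidth :: "nat \<Rightarrow> (nat \<Rightarrow> nat set) \<Rightarrow> nat" where
  "joint_bandwidth N F = (\<Sum>i\<in>{1..N}. card (F i))"

definition graph_bandwidth :: "nat \<Rightarrow> (nat \<Rightarrow> nat set) \<Rightarrow> nat" where
  "graph_bandwidth N F = card {i\<in>{1..N}. F i \<noteq> {}}"

definition sampling_ratio :: "nat \<Rightarrow> nat \<Rightarrow> (nat \<times> nat) set \<Rightarrow> real" where
  "sampling_ratio N T S = real (card S) / (real N * real T)"

end

theory Submission
  imports Defs "HOL-Analysis.Analysis" "Jordan_Normal_Form.Determinant"
begin

definition nrm :: "'d set \<Rightarrow> ('d \<Rightarrow> complex) \<Rightarrow> real" where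
  "nrm A x = (\<Sum>p\<in>A. (cmod (x p))^2)"

lemma nrm_nonneg: "nrm A x \<ge> 0"
  unfolding nrm_def by (simp add: sum_nonneg)

lemma nrm_add: "nrm A (\<lambda>p. u p + v p) \<le> 2 * nrm A u + 2 * nrm A v"
proof -
  have "(cmod (u p + v p))^2 \<le> 2 * (cmod (u p))^2 + 2 * (cmod (v p))^2" for p
  proof -
    have "cmod (u p + v p) \<le> cmod (u p) + cmod (v p)" by (rule norm_triangle_ineq)
    hence "(cmod (u p + v p))^2 \<le> (cmod (u p) + cmod (v p))^2"
      by (simp add: power_mono)
    also have "\<dots> \<le> 2 * (cmod (u p))^2 + 2 * (cmod (v p))^2"
    proof -
      have "0 \<le> (cmod (u p) - cmod (v p))^2" by simp
      thus ?thesis unfolding power2_diff power2_sum by linarith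
    qed
    finally show ?thesis .
  qed
  hence "nrm A (\<lambda>p. u p + v p) \<le> (\<Sum>p\<in>A. 2 * (cmod (u p))^2 + 2 * (cmod (v p))^2)"
    unfolding nrm_def by (rule sum_mono)
  thus ?thesis by (simp add: nrm_def sum.distrib sum_distrib_left)
qed

lemma nrm_scale: "nrm A (\<lambda>p. b * u p) = (cmod b)^2 * nrm A u"
  unfolding nrm_def by (simp add: norm_mult power_mult_distrib sum_distrib_left)

lemma nrm_mono: "finite B \<Longrightarrow> A \<subseteq> B \<Longrightarrow> nrm A u \<le> nrm B u"
  unfolding nrm_def by (rule sum_mono2) auto

lemma nrm_cong: "(\<And>p. p \<in> A \<Longrightarrow> u p = v p) \<Longrightarrow> nrm A u = nrm A v"
  unfolding nrm_def by simp

lemma nrm_point: "finite A \<Longrightarrow> d \<in> A \<Longrightarrow> (cmod (u d))^2 \<le> nrm A u"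
  unfolding nrm_def by (rule member_le_sum) auto

lemma sel:
  fixes w :: "'j \<Rightarrow> 'd \<Rightarrow> complex"
  assumes "finite D" "finite J"
  shows "\<exists>S C. S \<subseteq> D \<and> card S \<le> card J \<and> C \<ge> 0 \<and>
     (\<forall>c. nrm D (\<lambda>p. \<Sum>j\<in>J. c j * w j p) \<le> C * nrm S (\<lambda>p. \<Sum>j\<in>J. c j * w j p))"
  using assms(2)
proof (induction J arbitrary: w rule: finite_induct)
  case empty
  show ?case by (rule exI[of _ "{}"], rule exI[of _ 0]) (simp add: nrm_def)
next
  case (insert k J0)
  show ?case
  proof (cases "\<forall>p\<in>D. w k p = 0")
    case True
    from insert.IH[of w] obtain S C where SC: "S \<subseteq> D" "card S \<le> card J0" "C \<ge> 0"
      "\<forall>c. nrm D (\<lambda>p. \<Sum>j\<in>J0. c j * w j p) \<le> C * nrm S (\<lambda>p. \<Sum>j\<in>J0. c j * w j p)" by blast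
    have eq: "(\<Sum>j\<in>insert k J0. c j * w j p) = (\<Sum>j\<in>J0. c j * w j p)" if "p \<in> D" for c p
      using True that insert.hyps by simp
    show ?thesis
    proof (intro exI conjI allI)
      show "S \<subseteq> D" "C \<ge> 0" by fact+
      show "card S \<le> card (insert k J0)" using SC(2) insert.hyps by simp
      fix c
      have "nrm D (\<lambda>p. \<Sum>j\<in>insert k J0. c j * w j p) = nrm D (\<lambda>p. \<Sum>j\<in>J0. c j * w j p)"
        by (rule nrm_cong) (simp add: eq)
      moreover have "nrm S (\<lambda>p. \<Sum>j\<in>insert k J0. c j * w j p) = nrm S (\<lambda>p. \<Sum>j\<in>J0. c j * w j p)"
        by (rule nrm_cong) (use SC(1) eq in auto)
      ultimately show "nrm D (\<lambda>p. \<Sum>j\<in>insert k J0. c j * w j p) \<le> C * nrm S (\<lambda>p. \<Sum>j\<in>insert k J0. c j * w j p)"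
        using SC(4) by simp
    qed
  next
    case False
    then obtain d where d: "d \<in> D" "w k d \<noteq> 0" by blast
    define w' where "w' j p = w j p - w j d / w k d * w k p" for j p
    from insert.IH[of w'] obtain S' C' where SC: "S' \<subseteq> D" "card S' \<le> card J0" "C' \<ge> 0"
      "\<forall>c. nrm D (\<lambda>p. \<Sum>j\<in>J0. c j * w' j p) \<le> C' * nrm S' (\<lambda>p. \<Sum>j\<in>J0. c j * w' j p)" by blast
    define R where "R = nrm D (w k) / (cmod (w k d))^2"
    have R0: "R \<ge> 0" unfolding R_def using nrm_nonneg[of D "w k"] by simp
    show ?thesis
    proof (intro exI conjI allI)
      show "insert d S' \<subseteq> D" using SC(1) d by simp
      show "card (insert d S') \<le> card (insert k J0)"
      proof -
        have "finite S'" using SC(1) assms(1) finite_subset by blast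
        hence "card (insert d S') \<le> Suc (card S')" by (simp add: card_insert_if)
        thus ?thesis using SC(2) insert.hyps by simp
      qed
      show "4 * C' * (1 + R) + 2 * R \<ge> 0" using SC(3) R0 by simp
      fix c
      define x where "x p = (\<Sum>j\<in>insert k J0. c j * w j p)" for p
      define a where "a = x d"
      define b where "b = a / w k d"
      define x' where "x' p = (\<Sum>j\<in>J0. c j * w' j p)" for p
      have x'eq: "x' p = x p - b * w k p" for p
      proof -
        have "x' p = (\<Sum>j\<in>J0. c j * w j p) - (\<Sum>j\<in>J0. c j * w j d) / w k d * w k p"
          unfolding x'_def w'_def
          by (simp add: right_diff_distrib sum_subtractf sum_distrib_right sum_divide_distrib mult.assoc)
        moreover have "x p = (\<Sum>j\<in>J0. c j * w j p) + c k * w k p" "a = (\<Sum>j\<in>J0. c j * w j d) + c k * w k d"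
          unfolding a_def x_def using insert.hyps by (simp_all add: add.commute)
        ultimately show ?thesis unfolding b_def using d(2) by (simp add: field_simps)
      qed
      let ?S = "insert d S'"
      have finS: "finite ?S" using SC(1) d assms(1) finite_subset by blast
      have xs: "x = (\<lambda>p. x' p + b * w k p)" using x'eq by auto
      have x's: "x' = (\<lambda>p. x p + (- b) * w k p)" using x'eq by auto
      have bsq: "(cmod b)^2 * nrm D (w k) = (cmod a)^2 * R"
        unfolding b_def R_def using d(2) by (simp add: norm_divide power_divide)
      have h1: "nrm D x \<le> 2 * nrm D x' + 2 * ((cmod a)^2 * R)"
        using nrm_add[of D x' "\<lambda>p. b * w k p"] nrm_scale[of D b "w k"] bsq xs by simp
      have h2: "nrm D x' \<le> C' * nrm S' x'" using SC(4) unfolding x'_def by blast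
      have h3: "nrm S' x' \<le> 2 * nrm S' x + 2 * ((cmod b)^2 * nrm S' (w k))"
        using nrm_add[of S' x "\<lambda>p. (-b) * w k p"] nrm_scale[of S' "-b" "w k"] x's by simp
      have h4: "nrm S' (w k) \<le> nrm D (w k)" using nrm_mono[OF assms(1) SC(1)] .
      have h5: "(cmod b)^2 * nrm S' (w k) \<le> (cmod a)^2 * R"
        using h4 bsq by (metis mult_left_mono zero_le_power2)
      have h6: "nrm S' x \<le> nrm ?S x" using nrm_mono[OF finS] by auto
      have h7: "(cmod a)^2 \<le> nrm ?S x" unfolding a_def using nrm_point[OF finS] by simp
      have h8: "(cmod a)^2 * R \<le> R * nrm ?S x" using h7 R0 by (simp add: mult.commute mult_left_mono)
      have "nrm S' x' \<le> 2 * nrm ?S x + 2 * (R * nrm ?S x)" using h3 h5 h6 h8 by linarith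
      hence "C' * nrm S' x' \<le> C' * (2 * nrm ?S x + 2 * (R * nrm ?S x))"
        using SC(3) by (simp add: mult_left_mono)
      hence "nrm D x \<le> 2 * (C' * (2 * nrm ?S x + 2 * (R * nrm ?S x))) + 2 * (R * nrm ?S x)"
        using h1 h2 h8 by linarith
      thus "nrm D (\<lambda>p. \<Sum>j\<in>insert k J0. c j * w j p) \<le> (4 * C' * (1 + R) + 2 * R) * nrm ?S (\<lambda>p. \<Sum>j\<in>insert k J0. c j * w j p)"
        unfolding x_def[symmetric] by (simp add: algebra_simps)
    qed
  qed
qed

lemma dft_term:
  "dftH T f n * dftU T n' f =
   complex_of_real (1 / real T) * exp (\<i> * complex_of_real (2 * pi * (real n' - real n) / real T)) ^ f"
proof -
  have e: "exp (\<i> * complex_of_real (2 * pi * (real n' - real n) / real T)) ^ f =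
        exp (of_nat f * (\<i> * complex_of_real (2 * pi * (real n' - real n) / real T)))"
    by (rule exp_of_nat_mult[symmetric])
  have c: "cnj (dftH T f n') = complex_of_real (1 / sqrt (real T)) *
                 exp (\<i> * complex_of_real (2 * pi * (real n' - 1) * real f / real T))"
    unfolding dftH_def by (simp add: exp_cnj)
  have "dftH T f n * dftU T n' f = complex_of_real (1 / sqrt (real T)) * complex_of_real (1 / sqrt (real T)) *
      (exp (- \<i> * complex_of_real (2 * pi * (real n - 1) * real f / real T)) *
       exp (\<i> * complex_of_real (2 * pi * (real n' - 1) * real f / real T)))"
    unfolding dftU_def c by (simp add: dftH_def mult_ac)
  also have "\<dots> = complex_of_real (1 / real T) *
      exp (- \<i> * complex_of_real (2 * pi * (real n - 1) * real f / real T) +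
           \<i> * complex_of_real (2 * pi * (real n' - 1) * real f / real T))"
    by (simp add: exp_add[symmetric] of_real_mult[symmetric] del: of_real_mult)
  also have "- \<i> * complex_of_real (2 * pi * (real n - 1) * real f / real T) +
           \<i> * complex_of_real (2 * pi * (real n' - 1) * real f / real T) =
           of_nat f * (\<i> * complex_of_real (2 * pi * (real n' - real n) / real T))"
  proof -
    have gen: "\<And>a b. - \<i> * complex_of_real a + \<i> * complex_of_real b = \<i> * complex_of_real (b - a)"
      by (simp add: algebra_simps)
    have "- \<i> * complex_of_real (2 * pi * (real n - 1) * real f / real T) +
           \<i> * complex_of_real (2 * pi * (real n' - 1) * real f / real T) =
          \<i> * complex_of_real (2 * pi * (real n' - 1) * real f / real T - 2 * pi * (real n - 1) * real f / real T)"
      using gen by blast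
    also have "2 * pi * (real n' - 1) * real f / real T - 2 * pi * (real n - 1) * real f / real T
       = real f * (2 * pi * (real n' - real n) / real T)"
      by (simp add: diff_divide_distrib[symmetric] algebra_simps)
    finally show ?thesis by simp
  qed
  finally show ?thesis using e by simp
qed

lemma dft_orth:
  assumes "n \<in> {1..T}" "n' \<in> {1..T}"
  shows "(\<Sum>f\<in>{1..T}. dftH T f n * dftU T n' f) = (if n = n' then 1 else 0)"
proof -
  define z where "z = exp (\<i> * complex_of_real (2 * pi * (real n' - real n) / real T))"
  have T0: "T > 0" using assms by simp
  have s: "(\<Sum>f\<in>{1..T}. dftH T f n * dftU T n' f) = complex_of_real (1 / real T) * (\<Sum>f\<in>{1..T}. z ^ f)"
    unfolding dft_term z_def by (simp add: sum_distrib_left)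
  show ?thesis
  proof (cases "n = n'")
    case True
    hence "z = 1" unfolding z_def by simp
    thus ?thesis using s True T0 by simp
  next
    case False
    have zT: "z ^ T = 1"
    proof -
      have "z ^ T = exp (of_nat T * (\<i> * complex_of_real (2 * pi * (real n' - real n) / real T)))"
        unfolding z_def by (rule exp_of_nat_mult[symmetric])
      also have "of_nat T * (\<i> * complex_of_real (2 * pi * (real n' - real n) / real T)) =
          \<i> * (of_int (int n' - int n) * (of_real pi * 2))"
        using T0 by (simp add: field_simps)
      also have "exp \<dots> = 1"
        by (rule exp_2pi_1_int)
      finally show ?thesis .
    qed
    have z1: "z \<noteq> 1"
    proof
      assume "z = 1"
      then obtain m :: int where m: "2 * pi * (real n' - real n) / real T = of_int (2 * m) * pi"
        unfolding z_def exp_eq_1 by auto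
      hence "2 * pi * (real n' - real n) = 2 * pi * (real T * of_int m)" using T0 by (simp add: field_simps)
      hence "real n' - real n = real T * of_int m" by simp
      hence mi: "int n' - int n = int T * m" by (metis of_int_eq_iff of_int_mult of_int_of_nat_eq of_int_diff)
      show False
      proof (cases "m = 0")
        case True then show False using mi False by simp
      next
        case m0: False
        hence "\<bar>m\<bar> \<ge> 1" by simp
        hence "int T * \<bar>m\<bar> \<ge> int T * 1" by (intro mult_left_mono) auto
        hence "\<bar>int T * m\<bar> \<ge> int T" by (simp add: abs_mult)
        moreover have "\<bar>int n' - int n\<bar> < int T" using assms by auto
        ultimately show False using mi by simp
      qed
    qed
    have "(\<Sum>f\<in>{1..T}. z ^ f) = (\<Sum>f<T. z ^ Suc f)"
      by (simp add: sum.atLeast1_atMost_eq)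
    also have "\<dots> = z * (\<Sum>f<T. z ^ f)" by (simp add: sum_distrib_left)
    also have "\<dots> = 0" using zT z1 by (simp add: sum_gp_strict)
    finally show ?thesis using s False by simp
  qed
qed

lemma sum_shift1: "(\<Sum>k\<in>{1..N}. g k) = (\<Sum>k\<in>{0..<N}. g (Suc k))"
  by (simp add: sum.atLeast1_atMost_eq atLeast0LessThan)

lemma U_complete:
  fixes U :: "nat \<Rightarrow> nat \<Rightarrow> real"
  assumes orth: "\<forall>i\<in>{1..N}. \<forall>j\<in>{1..N}. (\<Sum>k\<in>{1..N}. U k i * U k j) = (if i = j then 1 else 0)"
    and v: "v \<in> {1..N}" "v' \<in> {1..N}"
  shows "(\<Sum>i\<in>{1..N}. U v i * U v' i) = (if v = v' then 1 else 0)"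
proof -
  define A :: "real mat" where "A = mat N N (\<lambda>(r,c). U (Suc c) (Suc r))"
  define B :: "real mat" where "B = mat N N (\<lambda>(r,c). U (Suc r) (Suc c))"
  have AB: "A * B = 1\<^sub>m N"
  proof (rule eq_matI)
    fix r c assume rc: "r < dim_row (1\<^sub>m N)" "c < dim_col (1\<^sub>m N)"
    have "(A * B) $$ (r, c) = (\<Sum>k\<in>{0..<N}. U (Suc k) (Suc r) * U (Suc k) (Suc c))"
      using rc by (simp add: A_def B_def scalar_prod_def)
    also have "\<dots> = (\<Sum>k\<in>{1..N}. U k (Suc r) * U k (Suc c))"
      using sum_shift1[of "\<lambda>k. U k (Suc r) * U k (Suc c)" N] by simp
    also have "\<dots> = (if r = c then 1 else 0)" using orth rc by simp
    finally show "(A * B) $$ (r, c) = 1\<^sub>m N $$ (r, c)" using rc by simp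
  qed (simp_all add: A_def B_def)
  have BA: "B * A = 1\<^sub>m N"
    by (rule mat_mult_left_right_inverse[OF _ _ AB]) (simp_all add: A_def B_def)
  define r where "r = v - 1"
  define c where "c = v' - 1"
  have rc: "r < N" "c < N" "v = Suc r" "v' = Suc c" using v by (auto simp: r_def c_def)
  have "(B * A) $$ (r, c) = (\<Sum>k\<in>{0..<N}. U (Suc r) (Suc k) * U (Suc c) (Suc k))"
    using rc by (simp add: A_def B_def scalar_prod_def)
  also have "\<dots> = (\<Sum>i\<in>{1..N}. U v i * U v' i)"
    using sum_shift1[of "\<lambda>i. U v i * U v' i" N] rc by simp
  finally show ?thesis using BA rc by simp
qed

lemma jft_inv_time:
  assumes n: "n \<in> {1..T}"
  shows "(\<Sum>f\<in>{1..T}. JFT N T U X i f * dftU T n f) = (\<Sum>v'\<in>{1..N}. complex_of_real (U v' i) * X v' n)"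
proof -
  have "(\<Sum>f\<in>{1..T}. JFT N T U X i f * dftU T n f) =
      (\<Sum>f\<in>{1..T}. \<Sum>v'\<in>{1..N}. \<Sum>n'\<in>{1..T}. complex_of_real (U v' i) * X v' n' * (dftH T f n' * dftU T n f))"
    unfolding JFT_def by (simp add: sum_distrib_right dftU_def mult.assoc)
  also have "\<dots> = (\<Sum>v'\<in>{1..N}. \<Sum>n'\<in>{1..T}. complex_of_real (U v' i) * X v' n' * (\<Sum>f\<in>{1..T}. dftH T f n' * dftU T n f))"
  proof -
    have "(\<Sum>f\<in>{1..T}. \<Sum>v'\<in>{1..N}. \<Sum>n'\<in>{1..T}. complex_of_real (U v' i) * X v' n' * (dftH T f n' * dftU T n f))
       = (\<Sum>v'\<in>{1..N}. \<Sum>n'\<in>{1..T}. \<Sum>f\<in>{1..T}. complex_of_real (U v' i) * X v' n' * (dftH T f n' * dftU T n f))"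
      by (subst sum.swap, rule sum.cong[OF refl], rule sum.swap)
    thus ?thesis by (simp add: sum_distrib_left)
  qed
  also have "\<dots> = (\<Sum>v'\<in>{1..N}. \<Sum>n'\<in>{1..T}. if n' = n then complex_of_real (U v' i) * X v' n' else 0)"
  proof -
    have o: "\<And>n'. n' \<in> {1..T} \<Longrightarrow> (\<Sum>f\<in>{1..T}. dftH T f n' * dftU T n f) = (if n' = n then 1 else 0)"
      using dft_orth n by blast
    show ?thesis
      by (rule sum.cong[OF refl], rule sum.cong[OF refl], subst o, assumption, simp)
  qed
  also have "\<dots> = (\<Sum>v'\<in>{1..N}. complex_of_real (U v' i) * X v' n)"
    using n by (simp add: sum.delta')
  finally show ?thesis .
qed

lemma jft_inv:
  assumes orth: "\<forall>i\<in>{1..N}. \<forall>j\<in>{1..N}. (\<Sum>k\<in>{1..N}. U k i * U k j) = (if i = j then 1 else 0)"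
    and X: "X \<in> BL_F N T U F" and FT: "\<forall>i\<in>{1..N}. F i \<subseteq> {1..T}"
    and v: "v \<in> {1..N}" and n: "n \<in> {1..T}"
  shows "X v n = (\<Sum>i\<in>{1..N}. complex_of_real (U v i) * (\<Sum>f\<in>F i. JFT N T U X i f * dftU T n f))"
proof -
  have inner: "(\<Sum>f\<in>F i. JFT N T U X i f * dftU T n f) = (\<Sum>v'\<in>{1..N}. complex_of_real (U v' i) * X v' n)"
    if i: "i \<in> {1..N}" for i
  proof -
    have "(\<Sum>f\<in>F i. JFT N T U X i f * dftU T n f) = (\<Sum>f\<in>{1..T}. JFT N T U X i f * dftU T n f)"
      by (rule sum.mono_neutral_left) (use FT i X in \<open>auto simp: BL_F_def\<close>)
    thus ?thesis using jft_inv_time[OF n] by simp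
  qed
  have "(\<Sum>i\<in>{1..N}. complex_of_real (U v i) * (\<Sum>f\<in>F i. JFT N T U X i f * dftU T n f)) =
        (\<Sum>i\<in>{1..N}. \<Sum>v'\<in>{1..N}. complex_of_real (U v i * U v' i) * X v' n)"
    by (intro sum.cong refl) (simp add: inner sum_distrib_left mult.assoc)
  also have "\<dots> = (\<Sum>v'\<in>{1..N}. complex_of_real (\<Sum>i\<in>{1..N}. U v i * U v' i) * X v' n)"
    by (subst sum.swap) (simp add: sum_distrib_right)
  also have "\<dots> = (\<Sum>v'\<in>{1..N}. if v = v' then X v' n else 0)"
    by (rule sum.cong[OF refl], subst U_complete[OF orth v], assumption, simp)
  also have "\<dots> = X v n" using v by (simp add: sum.delta)
  finally show ?thesis by simp
qed

theorem theorem6: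
  fixes N T :: nat and W U :: "nat \<Rightarrow> nat \<Rightarrow> real" and F :: "nat \<Rightarrow> nat set"
  assumes "N \<ge> 1" and "T \<ge> 1"
    and "undirected_graph N W"
    and "orthonormal_laplacian_eigvecs N W U"
    and "\<forall>i\<in>{1..N}. F i \<subseteq> {1..T}"
    and "joint_bandwidth N F < N * T"
  shows "\<exists>S. S \<subseteq> {1..N} \<times> {1..T} \<and>
             stable_sampling N T (BL_F N T U F) S \<and>
             card S = joint_bandwidth N F \<and>
             sampling_ratio N T S = real (joint_bandwidth N F) / (real N * real T) \<and>
             card (fst ` S) \<le> graph_bandwidth N F"
proof -
  have orth: "\<forall>i\<in>{1..N}. \<forall>j\<in>{1..N}. (\<Sum>k\<in>{1..N}. U k i * U k j) = (if i = j then 1 else 0)"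
    using assms(4) unfolding orthonormal_laplacian_eigvecs_def by blast
  have FT: "\<forall>i\<in>{1..N}. F i \<subseteq> {1..T}" by fact
  define I where "I = {i\<in>{1..N}. F i \<noteq> {}}"
  have finI: "finite I" unfolding I_def by simp
  have IN: "I \<subseteq> {1..N}" unfolding I_def by auto
  define Bw where "Bw = joint_bandwidth N F"
  define BG where "BG = graph_bandwidth N F"
  have BG_I: "BG = card I" unfolding BG_def graph_bandwidth_def I_def by simp
  define Xp where "Xp X = (\<lambda>p. X (fst p) (snd p) :: complex)" for X :: "nat \<Rightarrow> nat \<Rightarrow> complex"
  obtain SG0 CG where SG0: "SG0 \<subseteq> {1..N}" "card SG0 \<le> card I" "CG \<ge> 0"
    "\<forall>c. nrm {1..N} (\<lambda>p. \<Sum>j\<in>I. c j * complex_of_real (U p j)) \<le> CG * nrm SG0 (\<lambda>p. \<Sum>j\<in>I. c j * complex_of_real (U p j))"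
    using sel[of "{1..N}" I "\<lambda>j p. complex_of_real (U p j)"] finI by auto
  define e where "e X n i = (\<Sum>f\<in>F i. JFT N T U X i f * dftU T n f)" for X n i
  have col: "X v n = (\<Sum>i\<in>I. e X n i * complex_of_real (U v i))"
    if X: "X \<in> BL_F N T U F" and v: "v \<in> {1..N}" and n: "n \<in> {1..T}" for X v n
  proof -
    have "X v n = (\<Sum>i\<in>{1..N}. complex_of_real (U v i) * e X n i)"
      unfolding e_def by (rule jft_inv[OF orth X FT v n])
    also have "\<dots> = (\<Sum>i\<in>I. complex_of_real (U v i) * e X n i)"
      by (rule sum.mono_neutral_right) (auto simp: I_def e_def)
    finally show ?thesis by (simp add: mult.commute)
  qed
  have colbound: "nrm {1..N} (\<lambda>v. X v n) \<le> CG * nrm SG0 (\<lambda>v. X v n)"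
    if X: "X \<in> BL_F N T U F" and n: "n \<in> {1..T}" for X n
  proof -
    have "nrm {1..N} (\<lambda>v. X v n) = nrm {1..N} (\<lambda>p. \<Sum>j\<in>I. e X n j * complex_of_real (U p j))"
      by (rule nrm_cong) (simp add: col[OF X _ n])
    moreover have "nrm SG0 (\<lambda>v. X v n) = nrm SG0 (\<lambda>p. \<Sum>j\<in>I. e X n j * complex_of_real (U p j))"
      by (rule nrm_cong) (use SG0(1) col[OF X _ n] in auto)
    moreover have "nrm {1..N} (\<lambda>p. \<Sum>j\<in>I. e X n j * complex_of_real (U p j)) \<le> CG * nrm SG0 (\<lambda>p. \<Sum>j\<in>I. e X n j * complex_of_real (U p j))"
      using SG0(4) by blast
    ultimately show ?thesis by simp
  qed
  define D2 where "D2 = SG0 \<times> {1..T}"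
  have finSG0: "finite SG0" using SG0(1) finite_subset by blast
  have finD2: "finite D2" unfolding D2_def using finSG0 by simp
  have sq_D2: "sqnorm N T X \<le> CG * nrm D2 (Xp X)" if X: "X \<in> BL_F N T U F" for X
  proof -
    have "sqnorm N T X = (\<Sum>n\<in>{1..T}. nrm {1..N} (\<lambda>v. X v n))"
      unfolding sqnorm_def nrm_def by (rule sum.swap)
    also have "\<dots> \<le> (\<Sum>n\<in>{1..T}. CG * nrm SG0 (\<lambda>v. X v n))"
      by (rule sum_mono) (rule colbound[OF X], simp)
    also have "\<dots> = CG * (\<Sum>n\<in>{1..T}. \<Sum>v\<in>SG0. (cmod (X v n))^2)"
      unfolding nrm_def by (simp add: sum_distrib_left)
    also have "\<dots> = CG * (\<Sum>v\<in>SG0. \<Sum>n\<in>{1..T}. (cmod (X v n))^2)"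
      by (subst sum.swap) (rule refl)
    also have "\<dots> = CG * nrm D2 (Xp X)"
      unfolding D2_def nrm_def Xp_def by (simp add: sum.cartesian_product case_prod_unfold)
    finally show ?thesis .
  qed
  have finF: "finite (F i)" if "i \<in> {1..N}" for i
    using FT that by (meson finite_atLeastAtMost finite_subset)
  define J2 where "J2 = Sigma {1..N} F"
  have finJ2: "finite J2" unfolding J2_def
    by (intro finite_SigmaI) (auto intro: finF)
  have cardJ2: "card J2 = Bw"
    unfolding J2_def Bw_def joint_bandwidth_def
    by (rule card_SigmaI) (auto intro: finF)
  obtain S C2 where S: "S \<subseteq> D2" "card S \<le> card J2" "C2 \<ge> 0"
    "\<forall>c. nrm D2 (\<lambda>p. \<Sum>j\<in>J2. c j * (complex_of_real (U (fst p) (fst j)) * dftU T (snd p) (snd j)))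
       \<le> C2 * nrm S (\<lambda>p. \<Sum>j\<in>J2. c j * (complex_of_real (U (fst p) (fst j)) * dftU T (snd p) (snd j)))"
    using sel[of D2 J2 "\<lambda>j p. complex_of_real (U (fst p) (fst j)) * dftU T (snd p) (snd j)"] finD2 finJ2
    by auto
  have rep: "Xp X p = (\<Sum>j\<in>J2. JFT N T U X (fst j) (snd j) * (complex_of_real (U (fst p) (fst j)) * dftU T (snd p) (snd j)))"
    if X: "X \<in> BL_F N T U F" and p: "p \<in> D2" for X p
  proof -
    obtain v n where pvn: "p = (v, n)" "v \<in> {1..N}" "n \<in> {1..T}" using p SG0(1) unfolding D2_def by auto
    have "Xp X p = (\<Sum>i\<in>{1..N}. complex_of_real (U v i) * (\<Sum>f\<in>F i. JFT N T U X i f * dftU T n f))"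
      unfolding Xp_def pvn(1) using jft_inv[OF orth X FT pvn(2,3)] by simp
    also have "\<dots> = (\<Sum>i\<in>{1..N}. \<Sum>f\<in>F i. JFT N T U X i f * (complex_of_real (U v i) * dftU T n f))"
      by (simp add: sum_distrib_left mult_ac)
    also have "\<dots> = (\<Sum>j\<in>J2. JFT N T U X (fst j) (snd j) * (complex_of_real (U v (fst j)) * dftU T n (snd j)))"
      unfolding J2_def
      using sum.Sigma[of "{1..N}" F "\<lambda>i f. JFT N T U X i f * (complex_of_real (U v i) * dftU T n f)"] finF
      by (simp add: case_prod_unfold)
    finally show ?thesis using pvn(1) by simp
  qed
  have D2S: "nrm D2 (Xp X) \<le> C2 * nrm S (Xp X)" if X: "X \<in> BL_F N T U F" for X
  proof -
    have "nrm D2 (Xp X) = nrm D2 (\<lambda>p. \<Sum>j\<in>J2. JFT N T U X (fst j) (snd j) * (complex_of_real (U (fst p) (fst j)) * dftU T (snd p) (snd j)))"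
      by (rule nrm_cong) (rule rep[OF X])
    moreover have "nrm S (Xp X) = nrm S (\<lambda>p. \<Sum>j\<in>J2. JFT N T U X (fst j) (snd j) * (complex_of_real (U (fst p) (fst j)) * dftU T (snd p) (snd j)))"
      by (rule nrm_cong) (use S(1) rep[OF X] in auto)
    moreover have "nrm D2 (\<lambda>p. \<Sum>j\<in>J2. JFT N T U X (fst j) (snd j) * (complex_of_real (U (fst p) (fst j)) * dftU T (snd p) (snd j)))
       \<le> C2 * nrm S (\<lambda>p. \<Sum>j\<in>J2. JFT N T U X (fst j) (snd j) * (complex_of_real (U (fst p) (fst j)) * dftU T (snd p) (snd j)))"
      using S(4)[rule_format, of "\<lambda>j. JFT N T U X (fst j) (snd j)"] by simp
    ultimately show ?thesis by simp
  qed
  have "card I \<le> N" using card_mono[OF _ IN] by simp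
  then obtain SG where SG: "SG0 \<subseteq> SG" "SG \<subseteq> {1..N}" "card SG = BG"
    using exists_subset_between[of SG0 BG "{1..N}"] SG0(1,2) BG_I by auto
  have Bw_le: "Bw \<le> card (SG \<times> {1..T})"
  proof -
    have "Bw = (\<Sum>i\<in>{1..N}. card (F i))" unfolding Bw_def joint_bandwidth_def ..
    also have "\<dots> = (\<Sum>i\<in>I. card (F i))"
      by (rule sum.mono_neutral_right) (auto simp: I_def)
    also have "\<dots> \<le> (\<Sum>i\<in>I. T)"
      by (rule sum_mono) (use FT IN in \<open>auto intro: card_mono[of "{1..T}", simplified]\<close>)
    also have "\<dots> = card SG * T" using SG(3) BG_I by simp
    finally show ?thesis by (simp add: card_cartesian_product)
  qed
  have finSG: "finite SG" using SG(2) finite_subset by blast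
  obtain S2 where S2: "S \<subseteq> S2" "S2 \<subseteq> SG \<times> {1..T}" "card S2 = Bw"
    using exists_subset_between[of S Bw "SG \<times> {1..T}"] S(1,2) cardJ2 Bw_le finSG SG(1)
    unfolding D2_def by force
  have S2grid: "S2 \<subseteq> {1..N} \<times> {1..T}" using S2(2) SG(2) by auto
  have finS2: "finite S2" using S2grid finite_subset by blast
  define K where "K = CG * C2"
  have K0: "K \<ge> 0" unfolding K_def using SG0(3) S(3) by simp
  have main: "sqnorm N T X \<le> K * nrm S2 (Xp X)" if X: "X \<in> BL_F N T U F" for X
  proof -
    have "sqnorm N T X \<le> CG * nrm D2 (Xp X)" by (rule sq_D2[OF X])
    also have "\<dots> \<le> CG * (C2 * nrm S (Xp X))" using D2S[OF X] SG0(3) by (rule mult_left_mono)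
    also have "\<dots> \<le> CG * (C2 * nrm S2 (Xp X))"
      using nrm_mono[OF finS2 S2(1), of "Xp X"] SG0(3) S(3) by (simp add: mult_left_mono)
    finally show ?thesis unfolding K_def by (simp add: mult.assoc)
  qed
  have sumeq: "(\<Sum>(v,n)\<in>A. (cmod (X v n))\<^sup>2) = nrm A (Xp X)" for A X
    unfolding nrm_def Xp_def by (simp add: case_prod_unfold)
  have sqeq: "sqnorm N T X = nrm ({1..N} \<times> {1..T}) (Xp X)" for X
    unfolding sqnorm_def nrm_def Xp_def by (simp add: sum.cartesian_product case_prod_unfold)
  have stable: "stable_sampling N T (BL_F N T U F) S2"
    unfolding stable_sampling_def
  proof (rule exI[of _ "1 / (K + 1)"], rule exI[of _ "1::real"], intro conjI ballI)
    show "0 < 1 / (K + 1)" using K0 by simp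
  next
    show "1 / (K + 1) \<le> (1::real)" using K0 by simp
  next
    fix X assume X: "X \<in> BL_F N T U F"
    have m: "sqnorm N T X \<le> K * nrm S2 (Xp X)" by (rule main[OF X])
    have nn: "nrm S2 (Xp X) \<ge> 0" by (rule nrm_nonneg)
    have "1 / (K + 1) * sqnorm N T X \<le> 1 / (K + 1) * (K * nrm S2 (Xp X))"
      using m K0 by (intro mult_left_mono) auto
    also have "\<dots> \<le> nrm S2 (Xp X)" using K0 nn by (simp add: field_simps)
    finally show "1 / (K + 1) * sqnorm N T X \<le> (\<Sum>(v,n)\<in>S2. (cmod (X v n))\<^sup>2)"
      by (simp add: sumeq)
  next
    fix X assume X: "X \<in> BL_F N T U F"
    have "nrm S2 (Xp X) \<le> sqnorm N T X" unfolding sqeq by (rule nrm_mono[OF _ S2grid]) simp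
    thus "(\<Sum>(v,n)\<in>S2. (cmod (X v n))\<^sup>2) \<le> 1 * sqnorm N T X" by (simp add: sumeq)
  qed
  have fstS2: "card (fst ` S2) \<le> BG"
  proof -
    have "fst ` S2 \<subseteq> SG" using S2(2) by auto
    hence "card (fst ` S2) \<le> card SG" using finSG by (rule card_mono[rotated])
    thus ?thesis using SG(3) by simp
  qed
  show ?thesis
  proof (intro exI[of _ S2] conjI)
    show "S2 \<subseteq> {1..N} \<times> {1..T}" by fact
    show "stable_sampling N T (BL_F N T U F) S2" by fact
    show "card S2 = joint_bandwidth N F" using S2(3) Bw_def by simp
    show "sampling_ratio N T S2 = real (joint_bandwidth N F) / (real N * real T)"
      unfolding sampling_ratio_def using S2(3) Bw_def by simp
    show "card (fst ` S2) \<le> graph_bandwidth N F" using fstS2 BG_def by simp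
  qed
qed

end
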